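(* Suppose $(y,X)$ follows the functional logistic regression model. Let $\rho$ satisfy (A1) and (A2), and let $w$ be a non-negative bounded function. (a) For every $\theta=(\alpha,\beta)\in\mathbb R\times L^2([0,1])$, $L(\theta_0)\le L(\theta)$. (b) Assume further that $\beta_0\in\mathcal H^\star$ and that $$\mathbb P\big(\{\langle X,\beta\rangle=a\}\cup\{w(X)=0\}\big)<1\quad\text{for all } a\in\mathbb R,\ \beta\in\mathcal H^\star \text{ with } (a,\beta)\ne0.$$ Then $L(\theta_0)<L(\theta)$ for every $\alpha\in\mathbb R$ and $\beta\in\mathcal H^\star$ with $\theta=(\alpha,\beta)\ne(\alpha_0,\beta_0)$.
   Context: Model: $y\in\{0,1\}$ and $X\in L^2([0,1])$, with $y\mid X\sim\mathrm{Bernoulli}(F(\alpha_0+\langle X,\beta_0\rangle))$, where $F(t)=e^t/(1+e^t)$, $\langle u,v\rangle=\int_0^1uv$, and $\theta_0=(\alpha_0,\beta_0)$. Loss: $d(y,t)=-y\log F(t)-(1-y)\log(1-F(t))$, $\psi=\rho'$, $G(t)=\int_0^t\psi(-\log u)\,du$, and $$\phi(y,t)=\rho(d(y,t))+G(F(t))+G(1-F(t)),\qquad L(\theta)=\mathbb E\big(\phi(y,\alpha+\langle X,\beta\rangle)w(X)\big).$$ Spaces: $\mathcal H$ is $L^2([0,1])$ or $C([0,1])$. $W^{1,\mathcal H}$ is $W^{1,2}([0,1])$ in the first case, and in the second case the Hölder space of $C^1$ functions with Lipschitz derivative. $\mathcal H^\star=\mathcal H$ when $\beta_0\in\mathcal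 H$, and $\mathcal H^\star=W^{1,\mathcal H}$ when $\beta_0\in W^{1,\mathcal H}$. Assumptions: (A1) $\rho:[0,\infty)\to\mathbb R$ is bounded and continuously differentiable, with bounded derivative $\psi$, and $\rho(0)=0$. (A2) $\psi\ge0$, and there exists $a\ge\log2$ with $\psi(t)>0$ for $0<t<a$. *)

theory Defs
  imports "HOL-Probability.Probability"
begin

definition L2_01 :: "(real \<Rightarrow> real) set" where
  "L2_01 = {f. set_borel_measurable lborel {0..1} f \<and>
               set_integrable lborel {0..1} (\<lambda>t. (f t)^2)}"

definition C_01 :: "(real \<Rightarrow> real) set" where
  "C_01 = {f. continuous_on {0..1} f}"

text \<open>W^{1,2}([0,1]): absolutely continuous functions whose derivative lies in L^2.\<close>
definition W12_01 :: "(real \<Rightarrow> real) set" where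
  "W12_01 = {f. \<exists>g\<in>L2_01. \<forall>t\<in>{0..1}. f t = f 0 + (LINT s:{0..t}|lborel. g s)}"

definition C11_01 :: "(real \<Rightarrow> real) set" where
  "C11_01 = {f. \<exists>f' K. (\<forall>t\<in>{0..1}. (f has_real_derivative f' t) (at t within {0..1})) \<and>
                       (\<forall>s\<in>{0..1}. \<forall>t\<in>{0..1}. \<bar>f' s - f' t\<bar> \<le> K * \<bar>s - t\<bar>)}"

definition Hstar_spaces :: "(real \<Rightarrow> real) set set" where
  "Hstar_spaces = {L2_01, C_01, W12_01, C11_01}"

text \<open>Equality as elements of L^2([0,1]) (almost everywhere on [0,1]).\<close>
definition L2_eq :: "(real \<Rightarrow> real) \<Rightarrow> (real \<Rightarrow> real) \<Rightarrow> bool" where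
  "L2_eq u v \<longleftrightarrow> (AE t in lborel. t \<in> {0..1} \<longrightarrow> u t = v t)"

definition ip01 :: "(real \<Rightarrow> real) \<Rightarrow> (real \<Rightarrow> real) \<Rightarrow> real" where
  "ip01 u v = (LINT t:{0..1}|lborel. u t * v t)"

definition logistic :: "real \<Rightarrow> real" where
  "logistic t = exp t / (1 + exp t)"

definition dev :: "real \<Rightarrow> real \<Rightarrow> real" where
  "dev y t = - y * ln (logistic t) - (1 - y) * ln (1 - logistic t)"

definition Gfun :: "(real \<Rightarrow> real) \<Rightarrow> real \<Rightarrow> real" where
  "Gfun \<psi> t = (LINT u:{0..t}|lborel. \<psi> (- ln u))"

definition phi :: "(real \<Rightarrow> real) \<Rightarrow> (real \<Rightarrow> real) \<Rightarrow> real \<Rightarrow> real \<Rightarrow> real" where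
  "phi \<rho> \<psi> y t = \<rho> (dev y t) + Gfun \<psi> (logistic t) + Gfun \<psi> (1 - logistic t)"

definition Lrisk :: "'a measure \<Rightarrow> ('a \<Rightarrow> real) \<Rightarrow> ('a \<Rightarrow> real \<Rightarrow> real) \<Rightarrow>
    (real \<Rightarrow> real) \<Rightarrow> (real \<Rightarrow> real) \<Rightarrow> ((real \<Rightarrow> real) \<Rightarrow> real) \<Rightarrow>
    real \<Rightarrow> (real \<Rightarrow> real) \<Rightarrow> real" where
  "Lrisk M y X \<rho> \<psi> w \<alpha> \<beta> =
     (LINT \<omega>|M. phi \<rho> \<psi> (y \<omega>) (\<alpha> + ip01 (X \<omega>) \<beta>) * w (X \<omega>))"

text \<open>The sigma-algebra generated by the L^2-valued random element X
  (generated by the continuous linear functionals x \<mapsto> <x,g>, g in L^2,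
   which generate the Borel sigma-algebra of the separable space L^2).\<close>
definition sigmaX :: "'a measure \<Rightarrow> ('a \<Rightarrow> real \<Rightarrow> real) \<Rightarrow> 'a measure" where
  "sigmaX M X = sigma (space M)
     {(\<lambda>\<omega>. ip01 (X \<omega>) g) -` B \<inter> space M | g B. g \<in> L2_01 \<and> B \<in> sets borel}"

end

theory Submission
  imports Defs
begin


lemma L2_sq_bound: "\<bar>(a::real) * b\<bar> \<le> a^2 + b^2"
proof -
  have "0 \<le> (\<bar>a\<bar> - \<bar>b\<bar>)^2" by simp
  then have "2*(\<bar>a\<bar>*\<bar>b\<bar>) \<le> \<bar>a\<bar>^2 + \<bar>b\<bar>^2" by (simp add: power2_diff)
  moreover have "0 \<le> \<bar>a\<bar>*\<bar>b\<bar>" by simp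
  ultimately show ?thesis unfolding abs_mult power2_abs by linarith
qed

lemma L2_prod_int:
  assumes "f \<in> L2_01" "g \<in> L2_01"
  shows "set_integrable lborel {0..1} (\<lambda>t. f t * g t)"
proof (rule set_integrable_bound[where f="\<lambda>t. (f t)^2 + (g t)^2"])
  show "set_integrable lborel {0..1} (\<lambda>t. (f t)^2 + (g t)^2)"
    using assms unfolding L2_01_def by (auto intro!: set_integral_add)
  have m1: "(\<lambda>x. indicator {0..1} x *\<^sub>R f x) \<in> borel_measurable lborel"
    and m2: "(\<lambda>x. indicator {0..1} x *\<^sub>R g x) \<in> borel_measurable lborel"
    using assms unfolding L2_01_def set_borel_measurable_def by auto
  have "(\<lambda>x. indicator {0..1} x *\<^sub>R (f x * g x)) = (\<lambda>x. (indicator {0..1} x *\<^sub>R f x) * (indicator {0..1} x *\<^sub>R g x))"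
    by (auto simp: indicator_def)
  then show "set_borel_measurable lborel {0..1} (\<lambda>t. f t * g t)"
    unfolding set_borel_measurable_def using m1 m2 by simp
  show "AE x in lborel. x \<in> {0..1} \<longrightarrow> norm (f x * g x) \<le> norm ((f x)^2 + (g x)^2)"
    using L2_sq_bound by auto
qed

lemma const1_L2: "(\<lambda>_. 1) \<in> L2_01"
  unfolding L2_01_def
  by (auto intro!: borel_integrable_atLeastAtMost' borel_measurable_continuous_on_indicator simp: set_borel_measurable_def)

lemma L2_L1: "g \<in> L2_01 \<Longrightarrow> set_integrable lborel {0..1} g"
  using L2_prod_int[OF const1_L2, of g] by simp

lemma C_L2: "C_01 \<subseteq> L2_01"
proof
  fix f assume "f \<in> C_01"
  then have c: "continuous_on {0..1} f" unfolding C_01_def by simp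
  have "set_borel_measurable lborel {0..1} f"
    unfolding set_borel_measurable_def
    using borel_measurable_continuous_on_indicator[OF _ c] by simp
  moreover have "set_integrable lborel {0..1} (\<lambda>t. (f t)^2)"
    by (intro borel_integrable_atLeastAtMost' continuous_intros c)
  ultimately show "f \<in> L2_01" unfolding L2_01_def by simp
qed

lemma C11_C: "C11_01 \<subseteq> C_01"
proof
  fix f assume "f \<in> C11_01"
  then obtain f' where "\<forall>t\<in>{0..1}. (f has_real_derivative f' t) (at t within {0..1})"
    unfolding C11_01_def by blast
  then have "continuous_on {0..1} f" by (intro DERIV_continuous_on) blast
  then show "f \<in> C_01" unfolding C_01_def by simp
qed

lemma W12_C: "W12_01 \<subseteq> C_01"
proof
  fix f assume "f \<in> W12_01"
  then obtain g where g: "g \<in> L2_01" and fe: "\<forall>t\<in>{0..1}. f t = f 0 + (LINT s:{0..t}|lborel. g s)"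
    unfolding W12_01_def by auto
  have gi: "set_integrable lborel {0..1} g" using L2_L1[OF g] .
  have gh: "g integrable_on {0..1}" using set_borel_integral_eq_integral(1)[OF gi] .
  have "\<forall>t\<in>{0..1}. f t = f 0 + integral {0..t} g"
  proof
    fix t :: real assume t: "t \<in> {0..1}"
    have si: "set_integrable lborel {0..t} g" by (rule set_integrable_subset[OF gi]) (use t in auto)
    show "f t = f 0 + integral {0..t} g" using bspec[OF fe t] set_borel_integral_eq_integral(2)[OF si] by simp
  qed
  note fe2 = this
  have cc: "continuous_on {0..1} (\<lambda>t. f 0 + integral {0..t} g)"
    using indefinite_integral_continuous_1[OF gh] by (intro continuous_on_add continuous_on_const)
  have "continuous_on {0..1} f"
    by (rule continuous_on_eq[OF cc]) (metis fe2)
  then show "f \<in> C_01" unfolding C_01_def by simp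
qed

lemma Hs_L2: "Hs \<in> Hstar_spaces \<Longrightarrow> Hs \<subseteq> L2_01"
  unfolding Hstar_spaces_def using C_L2 C11_C W12_C by auto

lemma L2_diff:
  assumes "f \<in> L2_01" "g \<in> L2_01"
  shows "(\<lambda>t. f t - g t) \<in> L2_01"
proof -
  have m1: "(\<lambda>x. indicator {0..1} x *\<^sub>R f x) \<in> borel_measurable lborel"
    and m2: "(\<lambda>x. indicator {0..1} x *\<^sub>R g x) \<in> borel_measurable lborel"
    using assms unfolding L2_01_def set_borel_measurable_def by auto
  have "(\<lambda>x. indicator {0..1} x *\<^sub>R (f x - g x)) = (\<lambda>x. (indicator {0..1} x *\<^sub>R f x) - (indicator {0..1} x *\<^sub>R g x))"
    by (auto simp: indicator_def)
  then have sm: "set_borel_measurable lborel {0..1} (\<lambda>t. f t - g t)"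
    unfolding set_borel_measurable_def using m1 m2 by simp
  have "set_integrable lborel {0..1} (\<lambda>t. (f t - g t)^2)"
  proof (rule set_integrable_bound[where f="\<lambda>t. 2*(f t)^2 + 2*(g t)^2"])
    show "set_integrable lborel {0..1} (\<lambda>t. 2*(f t)^2 + 2*(g t)^2)"
      using assms unfolding L2_01_def by (auto intro!: set_integral_add set_integrable_mult_right)
    have "(\<lambda>x. indicator {0..1} x *\<^sub>R (f x - g x)^2) = (\<lambda>x. (indicator {0..1} x *\<^sub>R (f x - g x))^2)"
      by (auto simp: indicator_def)
    then show "set_borel_measurable lborel {0..1} (\<lambda>t. (f t - g t)^2)"
      using sm unfolding set_borel_measurable_def by simp
    show "AE x in lborel. x \<in> {0..1} \<longrightarrow> norm ((f x - g x)^2) \<le> norm (2*(f x)^2 + 2*(g x)^2)"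
    proof (intro AE_I2 impI)
      fix x
      have "0 \<le> (f x + g x)^2" by simp
      then have "(f x - g x)^2 \<le> 2*(f x)^2 + 2*(g x)^2"
        by (simp add: power2_diff power2_sum)
      then show "norm ((f x - g x)^2) \<le> norm (2*(f x)^2 + 2*(g x)^2)"
        by simp
    qed
  qed
  with sm show ?thesis unfolding L2_01_def by simp
qed

lemma C_diff: "f \<in> C_01 \<Longrightarrow> g \<in> C_01 \<Longrightarrow> (\<lambda>t. f t - g t) \<in> C_01"
  unfolding C_01_def by (auto intro: continuous_on_diff)

lemma W12_diff:
  assumes "f \<in> W12_01" "g \<in> W12_01"
  shows "(\<lambda>t. f t - g t) \<in> W12_01"
proof -
  obtain f' where f': "f' \<in> L2_01" and fe: "\<forall>t\<in>{0..1}. f t = f 0 + (LINT s:{0..t}|lborel. f' s)"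
    using assms(1) unfolding W12_01_def by auto
  obtain g' where g': "g' \<in> L2_01" and ge: "\<forall>t\<in>{0..1}. g t = g 0 + (LINT s:{0..t}|lborel. g' s)"
    using assms(2) unfolding W12_01_def by auto
  have "\<forall>t\<in>{0..1}. f t - g t = (f 0 - g 0) + (LINT s:{0..t}|lborel. f' s - g' s)"
  proof
    fix t :: real assume t: "t \<in> {0..1}"
    have si1: "set_integrable lborel {0..t} f'" by (rule set_integrable_subset[OF L2_L1[OF f']]) (use t in auto)
    have si2: "set_integrable lborel {0..t} g'" by (rule set_integrable_subset[OF L2_L1[OF g']]) (use t in auto)
    show "f t - g t = (f 0 - g 0) + (LINT s:{0..t}|lborel. f' s - g' s)"
      using bspec[OF fe t] bspec[OF ge t] set_integral_diff(2)[OF si1 si2] by simp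
  qed
  then show ?thesis unfolding W12_01_def using L2_diff[OF f' g'] by blast
qed

lemma C11_diff:
  assumes "f \<in> C11_01" "g \<in> C11_01"
  shows "(\<lambda>t. f t - g t) \<in> C11_01"
proof -
  obtain f' K where f1: "\<forall>t\<in>{0..1}. (f has_real_derivative f' t) (at t within {0..1})"
     and f2: "\<forall>s\<in>{0..1}. \<forall>t\<in>{0..1}. \<bar>f' s - f' t\<bar> \<le> K * \<bar>s - t\<bar>"
    using assms(1) unfolding C11_01_def by blast
  obtain g' L where g1: "\<forall>t\<in>{0..1}. (g has_real_derivative g' t) (at t within {0..1})"
     and g2: "\<forall>s\<in>{0..1}. \<forall>t\<in>{0..1}. \<bar>g' s - g' t\<bar> \<le> L * \<bar>s - t\<bar>"
    using assms(2) unfolding C11_01_def by blast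
  have "\<forall>t\<in>{0..1}. ((\<lambda>t. f t - g t) has_real_derivative (f' t - g' t)) (at t within {0..1})"
    using f1 g1 by (auto intro: DERIV_diff)
  moreover have "\<forall>s\<in>{0..1}. \<forall>t\<in>{0..1}. \<bar>(f' s - g' s) - (f' t - g' t)\<bar> \<le> (K + L) * \<bar>s - t\<bar>"
  proof (intro ballI)
    fix s t :: real assume "s \<in> {0..1}" "t \<in> {0..1}"
    then have "\<bar>f' s - f' t\<bar> \<le> K * \<bar>s - t\<bar>" "\<bar>g' s - g' t\<bar> \<le> L * \<bar>s - t\<bar>" using f2 g2 by auto
    then show "\<bar>(f' s - g' s) - (f' t - g' t)\<bar> \<le> (K + L) * \<bar>s - t\<bar>" by (simp add: distrib_right abs_diff_le_iff abs_le_iff)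
  qed
  ultimately show ?thesis unfolding C11_01_def mem_Collect_eq
    by (intro exI[of _ "\<lambda>t. f' t - g' t"] exI[of _ "K + L"]) simp
qed

lemma Hs_diff: "Hs \<in> Hstar_spaces \<Longrightarrow> f \<in> Hs \<Longrightarrow> g \<in> Hs \<Longrightarrow> (\<lambda>t. f t - g t) \<in> Hs"
  unfolding Hstar_spaces_def using L2_diff C_diff W12_diff C11_diff by auto

lemma ip01_diff:
  assumes "x \<in> L2_01" "f \<in> L2_01" "g \<in> L2_01"
  shows "ip01 x (\<lambda>t. f t - g t) = ip01 x f - ip01 x g"
proof -
  have "ip01 x (\<lambda>t. f t - g t) = (LINT t:{0..1}|lborel. x t * f t - x t * g t)"
    unfolding ip01_def by (simp add: right_diff_distrib)
  also have "\<dots> = ip01 x f - ip01 x g"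
    unfolding ip01_def by (rule set_integral_diff(2)[OF L2_prod_int[OF assms(1,2)] L2_prod_int[OF assms(1,3)]])
  finally show ?thesis .
qed



definition Gi :: "(real \<Rightarrow> real) \<Rightarrow> real \<Rightarrow> real" where
  "Gi \<psi> s = integral {0..s} (\<lambda>u. \<psi> (- ln u))"

definition hh :: "(real \<Rightarrow> real) \<Rightarrow> (real \<Rightarrow> real) \<Rightarrow> real \<Rightarrow> real \<Rightarrow> real" where
  "hh \<rho> \<psi> p s = p * \<rho> (- ln s) + (1 - p) * \<rho> (- ln (1 - s)) + Gfun \<psi> s + Gfun \<psi> (1 - s)"

definition hf :: "(real \<Rightarrow> real) \<Rightarrow> (real \<Rightarrow> real) \<Rightarrow> real \<Rightarrow> real \<Rightarrow> real" where
  "hf \<rho> \<psi> p s = p * \<rho> (- ln s) + (1 - p) * \<rho> (- ln (1 - s)) + Gi \<psi> s + Gi \<psi> (1 - s)"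

context
  fixes \<psi> :: "real \<Rightarrow> real" and Bp :: real
  assumes pc: "continuous_on {0..} \<psi>"
    and pb: "\<forall>t\<ge>0. \<bar>\<psi> t\<bar> \<le> Bp"
begin

lemma psi_max_cont: "continuous_on UNIV (\<lambda>v. \<psi> (max 0 v))"
  by (rule continuous_on_compose2[OF pc]) (auto intro: continuous_intros)

lemma k_setint:
  assumes "s \<le> 1"
  shows "set_integrable lborel {0..s} (\<lambda>u. \<psi> (- ln u))"
proof -
  have m: "(\<lambda>u. \<psi> (max 0 (- ln u))) \<in> borel_measurable lborel"
    using borel_measurable_continuous_on[OF psi_max_cont, of "\<lambda>u. - ln u" lborel] by simp
  have "integrable lborel (\<lambda>u. indicator {0..s} u *\<^sub>R \<psi> (max 0 (- ln u)))"
  proof (rule integrableI_bounded_set_indicator[where B=Bp])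
    show "emeasure lborel {0..s} < \<infinity>" by (cases "0 \<le> s") auto
  qed (use m pb in auto)
  moreover have "(\<lambda>u. indicator {0..s} u *\<^sub>R \<psi> (max 0 (- ln u))) = (\<lambda>u. indicator {0..s} u *\<^sub>R \<psi> (- ln u))"
  proof
    fix u :: real
    show "indicator {0..s} u *\<^sub>R \<psi> (max 0 (- ln u)) = indicator {0..s} u *\<^sub>R \<psi> (- ln u)"
    proof (cases "u \<in> {0..s}")
      case True
      then have "ln u \<le> 0" using assms by (cases "u = 0") auto
      then show ?thesis by (simp add: max_def)
    qed simp
  qed
  ultimately show ?thesis unfolding set_integrable_def by simp
qed

lemma k_int_on: "(\<lambda>u. \<psi> (- ln u)) integrable_on {0..1}"
  using set_borel_integral_eq_integral(1)[OF k_setint[of 1]] by simp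

lemma G_eq: "s \<le> 1 \<Longrightarrow> Gfun \<psi> s = Gi \<psi> s"
  unfolding Gfun_def Gi_def using set_borel_integral_eq_integral(2)[OF k_setint] by simp

lemma Gi_cont: "continuous_on {0..1} (Gi \<psi>)"
  unfolding Gi_def[abs_def] by (rule indefinite_integral_continuous_1[OF k_int_on])

lemma Gi_deriv:
  assumes "0 < x" "x < 1"
  shows "(Gi \<psi> has_real_derivative \<psi> (- ln x)) (at x)"
proof -
  have lnx: "ln x < 0" using assms by (simp add: ln_less_zero)
  have "- ln x \<in> interior {0..}" using lnx by simp
  then have c1: "isCont \<psi> (- ln x)" by (rule continuous_on_interior[OF pc])
  have c2: "isCont (\<lambda>u. - ln u) x" by (intro isCont_minus isCont_ln) (use assms in simp)
  have c3: "isCont (\<lambda>u. \<psi> (- ln u)) x" using isCont_o2[OF c2 c1] .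
  have c4: "continuous (at x within ({0..1} - {})) (\<lambda>u. \<psi> (- ln u))"
    using continuous_at_imp_continuous_within[OF c3] .
  have xin: "x \<in> {0..1} - {}" using assms by simp
  have d: "((\<lambda>u. integral {0..u} (\<lambda>u. \<psi> (- ln u))) has_vector_derivative \<psi> (- ln x)) (at x within ({0..1} - {}))"
    by (rule integral_has_vector_derivative_continuous_at[OF k_int_on xin finite.emptyI c4])
  have "at x within ({0..1} - {}) = at x" using assms by (intro at_within_interior) simp
  then have "((\<lambda>u. integral {0..u} (\<lambda>u. \<psi> (- ln u))) has_vector_derivative \<psi> (- ln x)) (at x)"
    using d by simp
  then show ?thesis unfolding Gi_def[abs_def] has_real_derivative_iff_has_vector_derivative .
qed


context
  fixes \<rho> :: "real \<Rightarrow> real"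
  assumes rd: "\<forall>t\<ge>0. (\<rho> has_real_derivative \<psi> t) (at t within {0..})"
    and pn: "\<forall>t\<ge>0. \<psi> t \<ge> 0"
    and ppos: "\<exists>a\<ge>ln 2. \<forall>t. 0 < t \<and> t < a \<longrightarrow> \<psi> t > 0"
begin

lemma rho_deriv:
  assumes t: "0 < t"
  shows "(\<rho> has_real_derivative \<psi> t) (at t)"
proof -
  have "(\<rho> has_real_derivative \<psi> t) (at t within {0..})" using rd t by simp
  moreover have "at t within {0..} = at t" by (intro at_within_interior) (use t in simp)
  ultimately show ?thesis by simp
qed

lemma hf_deriv:
  assumes x: "0 < x" "x < 1"
  shows "(hf \<rho> \<psi> p has_real_derivative (x - p) * (\<psi> (- ln x) / x + \<psi> (- ln (1 - x)) / (1 - x))) (at x)"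
proof -
  have l1: "((\<lambda>s. - ln s) has_real_derivative - inverse x) (at x)"
    using DERIV_ln[OF x(1)] by (rule DERIV_minus)
  have d1: "((\<lambda>s. \<rho> (- ln s)) has_real_derivative \<psi> (- ln x) * (- inverse x)) (at x)"
    by (rule DERIV_chain2[OF rho_deriv l1]) (use x in \<open>simp add: ln_less_zero\<close>)
  have om: "((\<lambda>s. 1 - s) has_real_derivative -1) (at x)"
    using DERIV_diff[OF DERIV_const[of 1] DERIV_ident] by simp
  have l2: "((\<lambda>s. - ln (1 - s)) has_real_derivative - (inverse (1 - x) * -1)) (at x)"
    using DERIV_chain2[OF DERIV_ln om] x by (intro DERIV_minus) simp
  have d2: "((\<lambda>s. \<rho> (- ln (1 - s))) has_real_derivative \<psi> (- ln (1 - x)) * (- (inverse (1 - x) * -1))) (at x)"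
    by (rule DERIV_chain2[OF rho_deriv l2]) (use x in \<open>simp add: ln_less_zero\<close>)
  have d3: "(Gi \<psi> has_real_derivative \<psi> (- ln x)) (at x)" using Gi_deriv x .
  have d4: "((\<lambda>s. Gi \<psi> (1 - s)) has_real_derivative \<psi> (- ln (1 - x)) * -1) (at x)"
    by (rule DERIV_chain2[OF Gi_deriv om]) (use x in simp_all)
  have "(hf \<rho> \<psi> p has_real_derivative
      p * (\<psi> (- ln x) * (- inverse x)) + (1 - p) * (\<psi> (- ln (1 - x)) * (- (inverse (1 - x) * -1)))
      + \<psi> (- ln x) + \<psi> (- ln (1 - x)) * -1) (at x)"
    unfolding hf_def[abs_def]
    by (intro DERIV_add DERIV_cmult d1 d2 d3 d4)
  moreover have "p * (\<psi> (- ln x) * (- inverse x)) + (1 - p) * (\<psi> (- ln (1 - x)) * (- (inverse (1 - x) * -1)))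
      + \<psi> (- ln x) + \<psi> (- ln (1 - x)) * -1
      = (x - p) * (\<psi> (- ln x) / x + \<psi> (- ln (1 - x)) / (1 - x))"
    using x by (simp add: field_simps)
  ultimately show ?thesis by simp
qed

lemma Bk_nonneg:
  assumes x: "0 < x" "x < 1"
  shows "0 \<le> \<psi> (- ln x) / x + \<psi> (- ln (1 - x)) / (1 - x)"
proof -
  have "0 \<le> \<psi> (- ln x)" using pn x by simp
  moreover have "0 \<le> \<psi> (- ln (1 - x))" using pn x by simp
  ultimately show ?thesis using x by simp
qed

lemma Bk_pos:
  assumes x: "0 < x" "x < 1" "x \<noteq> 1/2"
  shows "0 < \<psi> (- ln x) / x + \<psi> (- ln (1 - x)) / (1 - x)"
proof -
  obtain a where a: "a \<ge> ln 2" "\<forall>t. 0 < t \<and> t < a \<longrightarrow> \<psi> t > 0" using ppos by blast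
  have h2: "ln (1/2::real) = - ln 2" by (simp add: ln_div)
  have n1: "0 \<le> \<psi> (- ln x)" using pn x by simp
  have n2: "0 \<le> \<psi> (- ln (1 - x))" using pn x by simp
  show ?thesis
  proof (cases "x > 1/2")
    case True
    then have "ln (1/2) < ln x" by simp
    then have "- ln x < a" using h2 a(1) by linarith
    moreover have "0 < - ln x" using x by (simp add: ln_less_zero)
    ultimately have "\<psi> (- ln x) > 0" using a(2) by blast
    then show ?thesis using x n2 by (simp add: add_pos_nonneg)
  next
    case False
    then have "x < 1/2" using x(3) by simp
    then have "ln (1/2) < ln (1 - x)" by simp
    then have "- ln (1 - x) < a" using h2 a(1) by linarith
    moreover have "0 < - ln (1 - x)" using x by (simp add: ln_less_zero)
    ultimately have "\<psi> (- ln (1 - x)) > 0" using a(2) by blast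
    then show ?thesis using x n1 by (simp add: add_nonneg_pos)
  qed
qed

lemma hf_strict:
  assumes "0 < p" "p < s" "s < 1"
  shows "hf \<rho> \<psi> p p < hf \<rho> \<psi> p s"
proof -
  define q where "q = (if p < 1/2 \<and> 1/2 < s then 1/2 else (s::real))"
  have pq: "p < q" "q \<le> s" using assms unfolding q_def by auto
  have der: "\<And>z. p \<le> z \<Longrightarrow> z \<le> s \<Longrightarrow> (hf \<rho> \<psi> p has_real_derivative (z - p) * (\<psi> (- ln z) / z + \<psi> (- ln (1 - z)) / (1 - z))) (at z)"
    using hf_deriv assms by simp
  obtain z where z: "p < z" "z < q"
    and ze: "hf \<rho> \<psi> p q - hf \<rho> \<psi> p p = (q - p) * ((z - p) * (\<psi> (- ln z) / z + \<psi> (- ln (1 - z)) / (1 - z)))"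
    using MVT2[OF pq(1), of "hf \<rho> \<psi> p"] der pq by fastforce
  have "z \<noteq> 1/2" using z pq unfolding q_def by (auto split: if_splits)
  then have "0 < \<psi> (- ln z) / z + \<psi> (- ln (1 - z)) / (1 - z)"
    using Bk_pos z pq assms by simp
  then have "0 < (q - p) * ((z - p) * (\<psi> (- ln z) / z + \<psi> (- ln (1 - z)) / (1 - z)))"
    using z by (intro mult_pos_pos) simp_all
  then have lt: "hf \<rho> \<psi> p p < hf \<rho> \<psi> p q" using ze by linarith
  have "hf \<rho> \<psi> p q \<le> hf \<rho> \<psi> p s"
  proof (cases "q < s")
    case True
    have der2: "\<And>x. q \<le> x \<Longrightarrow> x \<le> s \<Longrightarrow> (hf \<rho> \<psi> p has_real_derivative (x - p) * (\<psi> (- ln x) / x + \<psi> (- ln (1 - x)) / (1 - x))) (at x)"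
    proof -
      fix x assume "q \<le> x" "x \<le> s"
      then show "(hf \<rho> \<psi> p has_real_derivative (x - p) * (\<psi> (- ln x) / x + \<psi> (- ln (1 - x)) / (1 - x))) (at x)"
        using pq by (intro der) simp_all
    qed
    obtain z' where z': "q < z'" "z' < s"
      and ze': "hf \<rho> \<psi> p s - hf \<rho> \<psi> p q = (s - q) * ((z' - p) * (\<psi> (- ln z') / z' + \<psi> (- ln (1 - z')) / (1 - z')))"
      using MVT2[OF True der2] by auto
    have "0 \<le> \<psi> (- ln z') / z' + \<psi> (- ln (1 - z')) / (1 - z')"
      using Bk_nonneg z' pq assms by simp
    then have "0 \<le> (s - q) * ((z' - p) * (\<psi> (- ln z') / z' + \<psi> (- ln (1 - z')) / (1 - z')))"
      using z' pq by (intro mult_nonneg_nonneg) simp_all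
    then show ?thesis using ze' by linarith
  qed (use pq in simp)
  with lt show ?thesis by simp
qed

lemma hf_sym: "hf \<rho> \<psi> (1 - p) (1 - s) = hf \<rho> \<psi> p s"
  unfolding hf_def by (simp add: algebra_simps)

lemma hf_min:
  assumes "0 < p" "p < 1" "0 < s" "s < 1"
  shows "hf \<rho> \<psi> p p \<le> hf \<rho> \<psi> p s \<and> (s \<noteq> p \<longrightarrow> hf \<rho> \<psi> p p < hf \<rho> \<psi> p s)"
proof (cases "p < s")
  case True then show ?thesis using hf_strict assms by force
next
  case False
  show ?thesis
  proof (cases "s = p")
    case False
    with \<open>\<not> p < s\<close> have "1 - p < 1 - s" by simp
    then have "hf \<rho> \<psi> (1 - p) (1 - p) < hf \<rho> \<psi> (1 - p) (1 - s)" using hf_strict assms by simp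
    then show ?thesis unfolding hf_sym by simp
  qed simp
qed

lemma hh_eq_hf: "0 \<le> s \<Longrightarrow> s \<le> 1 \<Longrightarrow> hh \<rho> \<psi> p s = hf \<rho> \<psi> p s"
  unfolding hh_def hf_def using G_eq by simp

lemma hh_min:
  assumes "0 < p" "p < 1" "0 < s" "s < 1"
  shows "hh \<rho> \<psi> p p \<le> hh \<rho> \<psi> p s \<and> (s \<noteq> p \<longrightarrow> hh \<rho> \<psi> p p < hh \<rho> \<psi> p s)"
  using hf_min[OF assms] hh_eq_hf assms by simp

end

end



lemma logistic_pos: "0 < logistic t"
  unfolding logistic_def by (simp add: add_pos_pos)

lemma logistic_lt1: "logistic t < 1"
  unfolding logistic_def by (simp add: add_pos_pos)

lemma onep_ne: "1 + exp (t::real) \<noteq> 0"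
proof -
  have "0 < 1 + exp t" by (simp add: add_pos_pos)
  then show ?thesis by linarith
qed

lemma logistic_cont: "continuous_on UNIV logistic"
proof -
  have "\<forall>t\<in>UNIV. 1 + exp t \<noteq> (0::real)" using onep_ne by simp
  then show ?thesis unfolding logistic_def[abs_def] by (intro continuous_intros) auto
qed

lemma logistic_inj:
  assumes "logistic t = logistic u" shows "t = u"
proof -
  have "exp t * (1 + exp u) = exp u * (1 + exp t)"
    using assms unfolding logistic_def by (simp add: frac_eq_eq onep_ne)
  then have "exp t = exp u" by (simp add: algebra_simps)
  then show ?thesis by simp
qed

locale lr_setting =
  fixes M :: "'a measure" and X :: "'a \<Rightarrow> real \<Rightarrow> real" and y :: "'a \<Rightarrow> real"
    and \<alpha>0 :: real and \<beta>0 :: "real \<Rightarrow> real"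
    and \<rho> \<psi> :: "real \<Rightarrow> real" and w :: "(real \<Rightarrow> real) \<Rightarrow> real"
    and Br Bp Bw :: real
  assumes prob: "prob_space M"
    and X_L2: "\<forall>\<omega>\<in>space M. X \<omega> \<in> L2_01"
    and X_meas: "\<forall>g\<in>L2_01. (\<lambda>\<omega>. ip01 (X \<omega>) g) \<in> borel_measurable M"
    and y_meas: "y \<in> borel_measurable M"
    and y_01: "\<forall>\<omega>\<in>space M. y \<omega> \<in> {0, 1}"
    and beta0_L2: "\<beta>0 \<in> L2_01"
    and model: "AE \<omega> in M. real_cond_exp M (sigmaX M X) y \<omega>
                              = logistic (\<alpha>0 + ip01 (X \<omega>) \<beta>0)"
    and rb: "\<forall>t\<ge>0. \<bar>\<rho> t\<bar> \<le> Br"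
    and rd: "\<forall>t\<ge>0. (\<rho> has_real_derivative \<psi> t) (at t within {0..})"
    and pc: "continuous_on {0..} \<psi>"
    and pb: "\<forall>t\<ge>0. \<bar>\<psi> t\<bar> \<le> Bp"
    and pn: "\<forall>t\<ge>0. \<psi> t \<ge> 0"
    and ppos: "\<exists>a\<ge>ln 2. \<forall>t. 0 < t \<and> t < a \<longrightarrow> \<psi> t > 0"
    and w_nonneg: "\<forall>x. 0 \<le> w x"
    and wb: "\<forall>x. w x \<le> Bw"
    and w_meas: "(\<lambda>\<omega>. w (X \<omega>)) \<in> borel_measurable (sigmaX M X)"
begin

abbreviation "S \<equiv> sigmaX M X"

definition gens where
  "gens = {(\<lambda>\<omega>. ip01 (X \<omega>) g) -` B \<inter> space M | g B. g \<in> L2_01 \<and> B \<in> sets borel}"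

lemma gens_Pow: "gens \<subseteq> Pow (space M)"
  unfolding gens_def by auto

lemma gens_sets: "gens \<subseteq> sets M"
  unfolding gens_def using X_meas measurable_sets by blast

lemma S_space: "space S = space M"
  unfolding sigmaX_def gens_def[symmetric] using space_measure_of[OF gens_Pow] by simp

lemma S_sets: "sets S = sigma_sets (space M) gens"
  unfolding sigmaX_def gens_def[symmetric] using sets_measure_of[OF gens_Pow] by simp

lemma subalg: "subalgebra M S"
  unfolding subalgebra_def S_space S_sets using sets.sigma_sets_subset[OF gens_sets] by simp

lemma fin: "finite_measure M"
  using prob by (simp add: prob_space_def)

lemma sfs: "sigma_finite_subalgebra M S"
  by (rule finite_measure_subalgebra_is_sigma_finite)
     (simp add: finite_measure_subalgebra_def finite_measure_subalgebra_axioms_def fin subalg)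

lemma ipX_S:
  assumes "g \<in> L2_01"
  shows "(\<lambda>\<omega>. ip01 (X \<omega>) g) \<in> borel_measurable S"
proof (rule measurableI)
  fix A :: "real set" assume "A \<in> sets borel"
  then have "(\<lambda>\<omega>. ip01 (X \<omega>) g) -` A \<inter> space M \<in> gens"
    unfolding gens_def using assms by blast
  then show "(\<lambda>\<omega>. ip01 (X \<omega>) g) -` A \<inter> space S \<in> sets S"
    unfolding S_space S_sets by (rule sigma_sets.Basic)
qed simp

lemma toM: "f \<in> borel_measurable S \<Longrightarrow> f \<in> borel_measurable M"
  by (rule measurable_from_subalg[OF subalg])

lemma bint:
  fixes C :: real
  assumes "f \<in> borel_measurable M" "\<And>\<omega>. \<omega> \<in> space M \<Longrightarrow> \<bar>f \<omega>\<bar> \<le> C"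
  shows "integrable M f"
  by (rule finite_measure.integrable_const_bound[OF fin, where B=C]) (use assms in auto)

definition pp where "pp \<omega> = logistic (\<alpha>0 + ip01 (X \<omega>) \<beta>0)"

lemma pp_S: "pp \<in> borel_measurable S"
  unfolding pp_def[abs_def]
  using borel_measurable_continuous_on[OF logistic_cont, of "\<lambda>\<omega>. \<alpha>0 + ip01 (X \<omega>) \<beta>0" S]
    ipX_S[OF beta0_L2] by simp

lemma swap:
  assumes Z: "Z \<in> borel_measurable S" and Zb: "\<And>\<omega>. \<omega> \<in> space M \<Longrightarrow> \<bar>Z \<omega>\<bar> \<le> C"
  shows "(\<integral>\<omega>. y \<omega> * Z \<omega> \<partial>M) = (\<integral>\<omega>. pp \<omega> * Z \<omega> \<partial>M)"
proof -
  have ZM: "Z \<in> borel_measurable M" using toM[OF Z] .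
  have yb: "\<And>\<omega>. \<omega> \<in> space M \<Longrightarrow> \<bar>y \<omega>\<bar> \<le> 1" using y_01 by auto
  have "\<And>\<omega>. \<omega> \<in> space M \<Longrightarrow> \<bar>Z \<omega> * y \<omega>\<bar> \<le> C * 1"
    unfolding abs_mult using Zb yb by (intro mult_mono) (auto simp: order.trans[OF abs_ge_zero Zb])
  then have "integrable M (\<lambda>\<omega>. Z \<omega> * y \<omega>)"
    using ZM y_meas by (intro bint) auto
  then have e1: "(\<integral>\<omega>. Z \<omega> * real_cond_exp M S y \<omega> \<partial>M) = (\<integral>\<omega>. Z \<omega> * y \<omega> \<partial>M)"
    using sigma_finite_subalgebra.real_cond_exp_intg(2)[OF sfs _ Z y_meas] by blast
  have cm: "real_cond_exp M S y \<in> borel_measurable M"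
    using borel_measurable_cond_exp2 .
  have e2: "(\<integral>\<omega>. Z \<omega> * real_cond_exp M S y \<omega> \<partial>M) = (\<integral>\<omega>. Z \<omega> * pp \<omega> \<partial>M)"
  proof (rule integral_cong_AE)
    show "(\<lambda>\<omega>. Z \<omega> * real_cond_exp M S y \<omega>) \<in> borel_measurable M" using ZM cm by simp
    show "(\<lambda>\<omega>. Z \<omega> * pp \<omega>) \<in> borel_measurable M" using ZM toM[OF pp_S] by simp
    show "AE \<omega> in M. Z \<omega> * real_cond_exp M S y \<omega> = Z \<omega> * pp \<omega>"
      using model unfolding pp_def by eventually_elim simp
  qed
  show ?thesis using e1 e2 by (simp add: mult.commute)
qed


lemma rho_cont: "continuous_on {0..} \<rho>"
  using rd by (intro DERIV_continuous_on) auto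

lemma nlnF: "0 \<le> - ln (logistic v)"
  using logistic_pos[of v] logistic_lt1[of v] by simp

lemma nlnF1: "0 \<le> - ln (1 - logistic v)"
  using logistic_pos[of v] logistic_lt1[of v] by simp

lemma c1_cont: "continuous_on UNIV (\<lambda>v. \<rho> (- ln (logistic v)))"
proof -
  have "continuous_on UNIV (\<lambda>v. - ln (logistic v))"
    using logistic_pos by (intro continuous_on_minus continuous_on_ln logistic_cont) (auto simp: less_imp_neq[symmetric])
  then show ?thesis by (rule continuous_on_compose2[OF rho_cont]) (use nlnF in auto)
qed

lemma c2_cont: "continuous_on UNIV (\<lambda>v. \<rho> (- ln (1 - logistic v)))"
proof -
  have "\<forall>v\<in>UNIV. 1 - logistic v \<noteq> 0" using logistic_lt1 by (simp add: less_imp_neq[symmetric])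
  then have "continuous_on UNIV (\<lambda>v. - ln (1 - logistic v))"
    by (intro continuous_on_minus continuous_on_ln continuous_on_diff continuous_on_const logistic_cont)
  then show ?thesis by (rule continuous_on_compose2[OF rho_cont]) (use nlnF1 in auto)
qed

lemma c3_cont: "continuous_on UNIV (\<lambda>v. Gi \<psi> (logistic v) + Gi \<psi> (1 - logistic v))"
proof -
  have a: "continuous_on UNIV (\<lambda>v. Gi \<psi> (logistic v))"
    by (rule continuous_on_compose2[OF Gi_cont[OF pc pb] logistic_cont])
       (use logistic_pos logistic_lt1 in \<open>auto simp: less_imp_le\<close>)
  have b: "continuous_on UNIV (\<lambda>v. Gi \<psi> (1 - logistic v))"
    by (rule continuous_on_compose2[OF Gi_cont[OF pc pb]])
       (use logistic_pos logistic_lt1 in \<open>auto simp: less_imp_le intro!: continuous_on_diff continuous_on_const logistic_cont\<close>)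
  show ?thesis using a b by (rule continuous_on_add)
qed

lemma Gi_bdd: "\<exists>BG. \<forall>s\<in>{0..1}. \<bar>Gi \<psi> s\<bar> \<le> BG"
proof -
  have "compact (Gi \<psi> ` {0..1})"
    by (rule compact_continuous_image[OF Gi_cont[OF pc pb]]) simp
  then have "bounded (Gi \<psi> ` {0..1})" by (rule compact_imp_bounded)
  then show ?thesis unfolding bounded_iff by auto
qed

lemma cw_meas:
  assumes "continuous_on UNIV c" "\<beta> \<in> L2_01"
  shows "(\<lambda>\<omega>. c (\<alpha> + ip01 (X \<omega>) \<beta>) * w (X \<omega>)) \<in> borel_measurable S"
proof -
  have "(\<lambda>\<omega>. c (\<alpha> + ip01 (X \<omega>) \<beta>)) \<in> borel_measurable S"
    using borel_measurable_continuous_on[OF assms(1), of "\<lambda>\<omega>. \<alpha> + ip01 (X \<omega>) \<beta>" S] ipX_S[OF assms(2)]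
    by simp
  then show ?thesis using w_meas by (rule borel_measurable_times)
qed

lemma cw_bound:
  fixes K :: real
  assumes "\<And>v. \<bar>c v\<bar> \<le> K"
  shows "\<bar>c v * w x\<bar> \<le> K * Bw"
proof -
  have "\<bar>c v * w x\<bar> = \<bar>c v\<bar> * w x" using w_nonneg by (simp add: abs_mult)
  also have "\<dots> \<le> K * Bw"
    using assms[of v] wb w_nonneg by (intro mult_mono) (auto intro: order.trans[OF abs_ge_zero])
  finally show ?thesis .
qed

lemma pp_bds: "0 < pp \<omega>" "pp \<omega> < 1"
  unfolding pp_def using logistic_pos logistic_lt1 by auto

lemma repr:
  assumes \<beta>: "\<beta> \<in> L2_01"
  shows "integrable M (\<lambda>\<omega>. hh \<rho> \<psi> (pp \<omega>) (logistic (\<alpha> + ip01 (X \<omega>) \<beta>)) * w (X \<omega>))"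
    and "Lrisk M y X \<rho> \<psi> w \<alpha> \<beta> = (\<integral>\<omega>. hh \<rho> \<psi> (pp \<omega>) (logistic (\<alpha> + ip01 (X \<omega>) \<beta>)) * w (X \<omega>) \<partial>M)"
proof -
  obtain BG where BG: "\<forall>s\<in>{0..1}. \<bar>Gi \<psi> s\<bar> \<le> BG" using Gi_bdd by blast
  define c1 where "c1 v = \<rho> (- ln (logistic v))" for v
  define c2 where "c2 v = \<rho> (- ln (1 - logistic v))" for v
  define c3 where "c3 v = Gi \<psi> (logistic v) + Gi \<psi> (1 - logistic v)" for v
  define A where "A \<omega> = c1 (\<alpha> + ip01 (X \<omega>) \<beta>) * w (X \<omega>)" for \<omega>
  define B where "B \<omega> = c2 (\<alpha> + ip01 (X \<omega>) \<beta>) * w (X \<omega>)" for \<omega>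
  define C where "C \<omega> = c3 (\<alpha> + ip01 (X \<omega>) \<beta>) * w (X \<omega>)" for \<omega>
  have c1b: "\<And>v. \<bar>c1 v\<bar> \<le> Br" unfolding c1_def using rb nlnF by blast
  have c2b: "\<And>v. \<bar>c2 v\<bar> \<le> Br" unfolding c2_def using rb nlnF1 by blast
  have c3b: "\<And>v. \<bar>c3 v\<bar> \<le> 2 * BG"
  proof -
    fix v
    have "\<bar>Gi \<psi> (logistic v)\<bar> \<le> BG" "\<bar>Gi \<psi> (1 - logistic v)\<bar> \<le> BG"
      using BG logistic_pos[of v] logistic_lt1[of v] by auto
    then show "\<bar>c3 v\<bar> \<le> 2 * BG" unfolding c3_def by linarith
  qed
  have AS: "A \<in> borel_measurable S" unfolding A_def[abs_def] c1_def using cw_meas[OF c1_cont \<beta>] .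
  have BS: "B \<in> borel_measurable S" unfolding B_def[abs_def] c2_def using cw_meas[OF c2_cont \<beta>] .
  have CS: "C \<in> borel_measurable S" unfolding C_def[abs_def] c3_def using cw_meas[OF c3_cont \<beta>] .
  have Ab: "\<And>\<omega>. \<bar>A \<omega>\<bar> \<le> Br * Bw" unfolding A_def using cw_bound[OF c1b] .
  have Bb: "\<And>\<omega>. \<bar>B \<omega>\<bar> \<le> Br * Bw" unfolding B_def using cw_bound[OF c2b] .
  have Cb: "\<And>\<omega>. \<bar>C \<omega>\<bar> \<le> 2 * BG * Bw" unfolding C_def using cw_bound[OF c3b] .
  have yb: "\<And>\<omega>. \<omega> \<in> space M \<Longrightarrow> \<bar>y \<omega>\<bar> \<le> 1" using y_01 by auto
  have pb1: "\<And>\<omega>. \<bar>pp \<omega>\<bar> \<le> 1" using pp_bds by (simp add: abs_le_iff less_imp_le)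
  have prod_b: "\<And>a b K \<omega>. \<bar>a\<bar> \<le> 1 \<Longrightarrow> \<bar>b\<bar> \<le> K \<Longrightarrow> \<bar>a * b\<bar> \<le> (K::real)"
  proof -
    fix a b K :: real assume "\<bar>a\<bar> \<le> 1" "\<bar>b\<bar> \<le> K"
    then have "\<bar>a\<bar> * \<bar>b\<bar> \<le> 1 * K" by (intro mult_mono) auto
    then show "\<bar>a * b\<bar> \<le> K" by (simp add: abs_mult)
  qed
  note AM = toM[OF AS] and BM = toM[OF BS] and CM = toM[OF CS] and pM = toM[OF pp_S]
  have iA: "integrable M A" by (rule bint[OF AM Ab])
  have iB: "integrable M B" by (rule bint[OF BM Bb])
  have iC: "integrable M C" by (rule bint[OF CM Cb])
  have iyA: "integrable M (\<lambda>\<omega>. y \<omega> * A \<omega>)"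
    by (rule bint[where C="Br * Bw"]) (use AM y_meas prod_b yb Ab in auto)
  have iyB: "integrable M (\<lambda>\<omega>. y \<omega> * B \<omega>)"
    by (rule bint[where C="Br * Bw"]) (use BM y_meas prod_b yb Bb in auto)
  have ipA: "integrable M (\<lambda>\<omega>. pp \<omega> * A \<omega>)"
    by (rule bint[where C="Br * Bw"]) (use AM pM prod_b pb1 Ab in auto)
  have ipB: "integrable M (\<lambda>\<omega>. pp \<omega> * B \<omega>)"
    by (rule bint[where C="Br * Bw"]) (use BM pM prod_b pb1 Bb in auto)
  have sA: "(\<integral>\<omega>. y \<omega> * A \<omega> \<partial>M) = (\<integral>\<omega>. pp \<omega> * A \<omega> \<partial>M)" by (rule swap[OF AS Ab])
  have sB: "(\<integral>\<omega>. y \<omega> * B \<omega> \<partial>M) = (\<integral>\<omega>. pp \<omega> * B \<omega> \<partial>M)" by (rule swap[OF BS Bb])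
  have Geq: "\<And>v. Gfun \<psi> (logistic v) + Gfun \<psi> (1 - logistic v) = c3 v"
    unfolding c3_def using G_eq[OF pc pb] logistic_pos logistic_lt1 by (simp add: less_imp_le)
  have phi_eq: "\<And>\<omega>. \<omega> \<in> space M \<Longrightarrow> phi \<rho> \<psi> (y \<omega>) (\<alpha> + ip01 (X \<omega>) \<beta>) * w (X \<omega>)
       = ((y \<omega> * A \<omega> + B \<omega>) - y \<omega> * B \<omega>) + C \<omega>"
  proof -
    fix \<omega> assume om: "\<omega> \<in> space M"
    have G3: "Gfun \<psi> (logistic (\<alpha> + ip01 (X \<omega>) \<beta>)) + Gfun \<psi> (1 - logistic (\<alpha> + ip01 (X \<omega>) \<beta>)) = c3 (\<alpha> + ip01 (X \<omega>) \<beta>)"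
      by (rule Geq)
    from y_01 om have "y \<omega> = 0 \<or> y \<omega> = 1" by auto
    then show "phi \<rho> \<psi> (y \<omega>) (\<alpha> + ip01 (X \<omega>) \<beta>) * w (X \<omega>)
       = ((y \<omega> * A \<omega> + B \<omega>) - y \<omega> * B \<omega>) + C \<omega>"
    proof
      assume y0: "y \<omega> = 0"
      show ?thesis unfolding phi_def A_def B_def C_def y0 G3[symmetric]
        by (simp add: dev_def c2_def algebra_simps)
    next
      assume y1: "y \<omega> = 1"
      show ?thesis unfolding phi_def A_def B_def C_def y1 G3[symmetric]
        by (simp add: dev_def c1_def algebra_simps)
    qed
  qed
  have hh_eq: "\<And>\<omega>. hh \<rho> \<psi> (pp \<omega>) (logistic (\<alpha> + ip01 (X \<omega>) \<beta>)) * w (X \<omega>)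
       = ((pp \<omega> * A \<omega> + B \<omega>) - pp \<omega> * B \<omega>) + C \<omega>"
  proof -
    fix \<omega>
    have G3: "Gfun \<psi> (logistic (\<alpha> + ip01 (X \<omega>) \<beta>)) + Gfun \<psi> (1 - logistic (\<alpha> + ip01 (X \<omega>) \<beta>)) = c3 (\<alpha> + ip01 (X \<omega>) \<beta>)"
      by (rule Geq)
    show "hh \<rho> \<psi> (pp \<omega>) (logistic (\<alpha> + ip01 (X \<omega>) \<beta>)) * w (X \<omega>)
       = ((pp \<omega> * A \<omega> + B \<omega>) - pp \<omega> * B \<omega>) + C \<omega>"
      unfolding hh_def A_def B_def C_def c1_def c2_def G3[symmetric] by (simp add: algebra_simps)
  qed
  have i2: "integrable M (\<lambda>\<omega>. ((pp \<omega> * A \<omega> + B \<omega>) - pp \<omega> * B \<omega>) + C \<omega>)"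
    using ipA iB ipB iC by simp
  then show "integrable M (\<lambda>\<omega>. hh \<rho> \<psi> (pp \<omega>) (logistic (\<alpha> + ip01 (X \<omega>) \<beta>)) * w (X \<omega>))"
    unfolding hh_eq .
  have "Lrisk M y X \<rho> \<psi> w \<alpha> \<beta> = (\<integral>\<omega>. ((y \<omega> * A \<omega> + B \<omega>) - y \<omega> * B \<omega>) + C \<omega> \<partial>M)"
    unfolding Lrisk_def by (rule Bochner_Integration.integral_cong[OF refl phi_eq])
  also have "\<dots> = (\<integral>\<omega>. y \<omega> * A \<omega> \<partial>M) + (\<integral>\<omega>. B \<omega> \<partial>M) - (\<integral>\<omega>. y \<omega> * B \<omega> \<partial>M) + (\<integral>\<omega>. C \<omega> \<partial>M)"
    using iyA iB iyB iC by simp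
  also have "\<dots> = (\<integral>\<omega>. pp \<omega> * A \<omega> \<partial>M) + (\<integral>\<omega>. B \<omega> \<partial>M) - (\<integral>\<omega>. pp \<omega> * B \<omega> \<partial>M) + (\<integral>\<omega>. C \<omega> \<partial>M)"
    using sA sB by simp
  also have "\<dots> = (\<integral>\<omega>. ((pp \<omega> * A \<omega> + B \<omega>) - pp \<omega> * B \<omega>) + C \<omega> \<partial>M)"
    using ipA iB ipB iC by simp
  also have "\<dots> = (\<integral>\<omega>. hh \<rho> \<psi> (pp \<omega>) (logistic (\<alpha> + ip01 (X \<omega>) \<beta>)) * w (X \<omega>) \<partial>M)"
    unfolding hh_eq ..
  finally show "Lrisk M y X \<rho> \<psi> w \<alpha> \<beta> = (\<integral>\<omega>. hh \<rho> \<psi> (pp \<omega>) (logistic (\<alpha> + ip01 (X \<omega>) \<beta>)) * w (X \<omega>) \<partial>M)" .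
qed


lemma hhm: "0 < p \<Longrightarrow> p < 1 \<Longrightarrow> 0 < s \<Longrightarrow> s < 1 \<Longrightarrow>
  hh \<rho> \<psi> p p \<le> hh \<rho> \<psi> p s \<and> (s \<noteq> p \<longrightarrow> hh \<rho> \<psi> p p < hh \<rho> \<psi> p s)"
  by (rule hh_min[OF pc pb rd pn ppos])

lemma partA:
  assumes \<beta>: "\<beta> \<in> L2_01"
  shows "Lrisk M y X \<rho> \<psi> w \<alpha>0 \<beta>0 \<le> Lrisk M y X \<rho> \<psi> w \<alpha> \<beta>"
proof -
  note i0 = repr(1)[OF beta0_L2, of \<alpha>0, folded pp_def]
  note e0 = repr(2)[OF beta0_L2, of \<alpha>0, folded pp_def]
  note i1 = repr(1)[OF \<beta>, of \<alpha>]
  note e1 = repr(2)[OF \<beta>, of \<alpha>]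
  show ?thesis unfolding e0 e1
  proof (rule integral_mono[OF i0 i1])
    fix \<omega>
    have "hh \<rho> \<psi> (pp \<omega>) (pp \<omega>) \<le> hh \<rho> \<psi> (pp \<omega>) (logistic (\<alpha> + ip01 (X \<omega>) \<beta>))"
      using hhm pp_bds logistic_pos logistic_lt1 by blast
    then show "hh \<rho> \<psi> (pp \<omega>) (pp \<omega>) * w (X \<omega>) \<le> hh \<rho> \<psi> (pp \<omega>) (logistic (\<alpha> + ip01 (X \<omega>) \<beta>)) * w (X \<omega>)"
      using w_nonneg by (intro mult_right_mono) auto
  qed
qed

lemma partB:
  assumes \<beta>: "\<beta> \<in> L2_01"
    and eq: "Lrisk M y X \<rho> \<psi> w \<alpha>0 \<beta>0 = Lrisk M y X \<rho> \<psi> w \<alpha> \<beta>"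
  shows "AE \<omega> in M. logistic (\<alpha> + ip01 (X \<omega>) \<beta>) = pp \<omega> \<or> w (X \<omega>) = 0"
proof -
  note i0 = repr(1)[OF beta0_L2, of \<alpha>0, folded pp_def]
  note e0 = repr(2)[OF beta0_L2, of \<alpha>0, folded pp_def]
  note i1 = repr(1)[OF \<beta>, of \<alpha>]
  note e1 = repr(2)[OF \<beta>, of \<alpha>]
  define D where "D \<omega> = hh \<rho> \<psi> (pp \<omega>) (logistic (\<alpha> + ip01 (X \<omega>) \<beta>)) * w (X \<omega>) - hh \<rho> \<psi> (pp \<omega>) (pp \<omega>) * w (X \<omega>)" for \<omega>
  have iD: "integrable M D" unfolding D_def[abs_def] using i0 i1 by simp
  have intD: "integral\<^sup>L M D = 0"
    unfolding D_def[abs_def] using i0 i1 eq e0 e1 by simp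
  have Dnn: "\<And>\<omega>. 0 \<le> D \<omega>"
  proof -
    fix \<omega>
    have "hh \<rho> \<psi> (pp \<omega>) (pp \<omega>) \<le> hh \<rho> \<psi> (pp \<omega>) (logistic (\<alpha> + ip01 (X \<omega>) \<beta>))"
      using hhm pp_bds logistic_pos logistic_lt1 by blast
    then have "hh \<rho> \<psi> (pp \<omega>) (pp \<omega>) * w (X \<omega>) \<le> hh \<rho> \<psi> (pp \<omega>) (logistic (\<alpha> + ip01 (X \<omega>) \<beta>)) * w (X \<omega>)"
      using w_nonneg by (intro mult_right_mono) auto
    then show "0 \<le> D \<omega>" unfolding D_def by simp
  qed
  have "AE \<omega> in M. D \<omega> = 0"
    using integral_nonneg_eq_0_iff_AE[OF iD] Dnn intD by simp
  then show ?thesis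
  proof eventually_elim
    fix \<omega> assume D0: "D \<omega> = 0"
    show "logistic (\<alpha> + ip01 (X \<omega>) \<beta>) = pp \<omega> \<or> w (X \<omega>) = 0"
    proof (rule ccontr)
      assume "\<not> (logistic (\<alpha> + ip01 (X \<omega>) \<beta>) = pp \<omega> \<or> w (X \<omega>) = 0)"
      then have ne: "logistic (\<alpha> + ip01 (X \<omega>) \<beta>) \<noteq> pp \<omega>" and wp: "0 < w (X \<omega>)"
        using w_nonneg by (auto simp: less_le)
      have "hh \<rho> \<psi> (pp \<omega>) (pp \<omega>) < hh \<rho> \<psi> (pp \<omega>) (logistic (\<alpha> + ip01 (X \<omega>) \<beta>))"
        using hhm pp_bds logistic_pos logistic_lt1 ne by blast
      then have "hh \<rho> \<psi> (pp \<omega>) (pp \<omega>) * w (X \<omega>) < hh \<rho> \<psi> (pp \<omega>) (logistic (\<alpha> + ip01 (X \<omega>) \<beta>)) * w (X \<omega>)"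
        using wp by (intro mult_strict_right_mono) auto
      then show False using D0 unfolding D_def by simp
    qed
  qed
qed

end


theorem lemmaA1:
  fixes M :: "'a measure" and X :: "'a \<Rightarrow> real \<Rightarrow> real" and y :: "'a \<Rightarrow> real"
    and \<alpha>0 :: real and \<beta>0 :: "real \<Rightarrow> real"
    and \<rho> \<psi> :: "real \<Rightarrow> real" and w :: "(real \<Rightarrow> real) \<Rightarrow> real"
  assumes prob: "prob_space M"
    and X_L2: "\<forall>\<omega>\<in>space M. X \<omega> \<in> L2_01"
    and X_meas: "\<forall>g\<in>L2_01. (\<lambda>\<omega>. ip01 (X \<omega>) g) \<in> borel_measurable M"
    and y_meas: "y \<in> borel_measurable M"
    and y_01: "\<forall>\<omega>\<in>space M. y \<omega> \<in> {0, 1}"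
    and beta0_L2: "\<beta>0 \<in> L2_01"
    and model: "AE \<omega> in M. real_cond_exp M (sigmaX M X) y \<omega>
                              = logistic (\<alpha>0 + ip01 (X \<omega>) \<beta>0)"
    and A1_bdd: "\<exists>B. \<forall>t\<ge>0. \<bar>\<rho> t\<bar> \<le> B"
    and A1_deriv: "\<forall>t\<ge>0. (\<rho> has_real_derivative \<psi> t) (at t within {0..})"
    and A1_cont: "continuous_on {0..} \<psi>"
    and A1_dbdd: "\<exists>B. \<forall>t\<ge>0. \<bar>\<psi> t\<bar> \<le> B"
    and A1_zero: "\<rho> 0 = 0"
    and A2_nonneg: "\<forall>t\<ge>0. \<psi> t \<ge> 0"
    and A2_pos: "\<exists>a\<ge>ln 2. \<forall>t. 0 < t \<and> t < a \<longrightarrow> \<psi> t > 0"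
    and w_nonneg: "\<forall>x. 0 \<le> w x"
    and w_bdd: "\<exists>B. \<forall>x. w x \<le> B"
    and w_meas: "(\<lambda>\<omega>. w (X \<omega>)) \<in> borel_measurable (sigmaX M X)"
  shows "(\<forall>\<alpha>. \<forall>\<beta>\<in>L2_01. Lrisk M y X \<rho> \<psi> w \<alpha>0 \<beta>0 \<le> Lrisk M y X \<rho> \<psi> w \<alpha> \<beta>)
       \<and> (\<forall>Hs\<in>Hstar_spaces. \<beta>0 \<in> Hs \<longrightarrow>
            (\<forall>a. \<forall>\<beta>\<in>Hs. (a \<noteq> 0 \<or> \<not> L2_eq \<beta> (\<lambda>_. 0)) \<longrightarrow>
               measure M {\<omega>\<in>space M. ip01 (X \<omega>) \<beta> = a \<or> w (X \<omega>) = 0} < 1) \<longrightarrow>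
            (\<forall>\<alpha>. \<forall>\<beta>\<in>Hs. (\<alpha> \<noteq> \<alpha>0 \<or> \<not> L2_eq \<beta> \<beta>0) \<longrightarrow>
               Lrisk M y X \<rho> \<psi> w \<alpha>0 \<beta>0 < Lrisk M y X \<rho> \<psi> w \<alpha> \<beta>))"
proof -
  obtain Br where rb: "\<forall>t\<ge>0. \<bar>\<rho> t\<bar> \<le> Br" using A1_bdd by blast
  obtain Bp where pb: "\<forall>t\<ge>0. \<bar>\<psi> t\<bar> \<le> Bp" using A1_dbdd by blast
  obtain Bw where wb: "\<forall>x. w x \<le> Bw" using w_bdd by blast
  interpret L: lr_setting M X y \<alpha>0 \<beta>0 \<rho> \<psi> w Br Bp Bw
    unfolding lr_setting_def
    by (intro conjI prob X_L2 X_meas y_meas y_01 beta0_L2 model rb A1_deriv A1_cont pb A2_nonneg A2_pos w_nonneg wb w_meas)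
  have partA: "\<forall>\<alpha>. \<forall>\<beta>\<in>L2_01. Lrisk M y X \<rho> \<psi> w \<alpha>0 \<beta>0 \<le> Lrisk M y X \<rho> \<psi> w \<alpha> \<beta>"
    using L.partA by blast
  have partB: "\<forall>Hs\<in>Hstar_spaces. \<beta>0 \<in> Hs \<longrightarrow>
            (\<forall>a. \<forall>\<beta>\<in>Hs. (a \<noteq> 0 \<or> \<not> L2_eq \<beta> (\<lambda>_. 0)) \<longrightarrow>
               measure M {\<omega>\<in>space M. ip01 (X \<omega>) \<beta> = a \<or> w (X \<omega>) = 0} < 1) \<longrightarrow>
            (\<forall>\<alpha>. \<forall>\<beta>\<in>Hs. (\<alpha> \<noteq> \<alpha>0 \<or> \<not> L2_eq \<beta> \<beta>0) \<longrightarrow>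
               Lrisk M y X \<rho> \<psi> w \<alpha>0 \<beta>0 < Lrisk M y X \<rho> \<psi> w \<alpha> \<beta>)"
  proof (intro ballI impI allI)
    fix Hs \<alpha> \<beta>
    assume Hs: "Hs \<in> Hstar_spaces" and b0: "\<beta>0 \<in> Hs"
      and hyp: "\<forall>a. \<forall>\<beta>\<in>Hs. (a \<noteq> 0 \<or> \<not> L2_eq \<beta> (\<lambda>_. 0)) \<longrightarrow>
               measure M {\<omega>\<in>space M. ip01 (X \<omega>) \<beta> = a \<or> w (X \<omega>) = 0} < 1"
      and \<beta>H: "\<beta> \<in> Hs" and nt: "\<alpha> \<noteq> \<alpha>0 \<or> \<not> L2_eq \<beta> \<beta>0"
    have \<beta>L: "\<beta> \<in> L2_01" using Hs_L2[OF Hs] \<beta>H by blast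
    have dH: "(\<lambda>t. \<beta> t - \<beta>0 t) \<in> Hs" using Hs_diff[OF Hs \<beta>H b0] .
    have dL: "(\<lambda>t. \<beta> t - \<beta>0 t) \<in> L2_01" using Hs_L2[OF Hs] dH by blast
    have le: "Lrisk M y X \<rho> \<psi> w \<alpha>0 \<beta>0 \<le> Lrisk M y X \<rho> \<psi> w \<alpha> \<beta>" using L.partA[OF \<beta>L] .
    show "Lrisk M y X \<rho> \<psi> w \<alpha>0 \<beta>0 < Lrisk M y X \<rho> \<psi> w \<alpha> \<beta>"
    proof (rule ccontr)
      assume "\<not> Lrisk M y X \<rho> \<psi> w \<alpha>0 \<beta>0 < Lrisk M y X \<rho> \<psi> w \<alpha> \<beta>"
      with le have eq: "Lrisk M y X \<rho> \<psi> w \<alpha>0 \<beta>0 = Lrisk M y X \<rho> \<psi> w \<alpha> \<beta>" by simp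
      have ae: "AE \<omega> in M. logistic (\<alpha> + ip01 (X \<omega>) \<beta>) = L.pp \<omega> \<or> w (X \<omega>) = 0"
        using L.partB[OF \<beta>L eq] .
      have ae2: "AE \<omega> in M. ip01 (X \<omega>) (\<lambda>t. \<beta> t - \<beta>0 t) = \<alpha>0 - \<alpha> \<or> w (X \<omega>) = 0"
        using ae AE_space
      proof eventually_elim
        fix \<omega> assume h: "logistic (\<alpha> + ip01 (X \<omega>) \<beta>) = L.pp \<omega> \<or> w (X \<omega>) = 0"
          and om: "\<omega> \<in> space M"
        show "ip01 (X \<omega>) (\<lambda>t. \<beta> t - \<beta>0 t) = \<alpha>0 - \<alpha> \<or> w (X \<omega>) = 0"
        proof (cases "w (X \<omega>) = 0")
          case False
          with h have "logistic (\<alpha> + ip01 (X \<omega>) \<beta>) = logistic (\<alpha>0 + ip01 (X \<omega>) \<beta>0)"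
            unfolding L.pp_def by simp
          then have "\<alpha> + ip01 (X \<omega>) \<beta> = \<alpha>0 + ip01 (X \<omega>) \<beta>0" by (rule logistic_inj)
          moreover have "ip01 (X \<omega>) (\<lambda>t. \<beta> t - \<beta>0 t) = ip01 (X \<omega>) \<beta> - ip01 (X \<omega>) \<beta>0"
            using ip01_diff X_L2 om \<beta>L beta0_L2 by blast
          ultimately show ?thesis by simp
        qed simp
      qed
      have f: "(\<lambda>\<omega>. ip01 (X \<omega>) (\<lambda>t. \<beta> t - \<beta>0 t)) \<in> borel_measurable M" using X_meas dL by blast
      have g: "(\<lambda>\<omega>. w (X \<omega>)) \<in> borel_measurable M" using L.toM[OF w_meas] .
      have setM: "{\<omega> \<in> space M. ip01 (X \<omega>) (\<lambda>t. \<beta> t - \<beta>0 t) = \<alpha>0 - \<alpha> \<or> w (X \<omega>) = 0} \<in> sets M"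
        using f g by measurable
      have m1: "measure M {\<omega> \<in> space M. ip01 (X \<omega>) (\<lambda>t. \<beta> t - \<beta>0 t) = \<alpha>0 - \<alpha> \<or> w (X \<omega>) = 0} = 1"
        using prob_space.prob_Collect_eq_1[OF prob setM] ae2 by simp
      have ntd: "\<alpha>0 - \<alpha> \<noteq> 0 \<or> \<not> L2_eq (\<lambda>t. \<beta> t - \<beta>0 t) (\<lambda>_. 0)"
      proof (cases "\<alpha> = \<alpha>0")
        case True
        with nt have nb: "\<not> L2_eq \<beta> \<beta>0" by simp
        have "\<not> L2_eq (\<lambda>t. \<beta> t - \<beta>0 t) (\<lambda>_. 0)"
        proof
          assume "L2_eq (\<lambda>t. \<beta> t - \<beta>0 t) (\<lambda>_. 0)"
          then have "L2_eq \<beta> \<beta>0" unfolding L2_eq_def by (rule eventually_mono) auto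
          with nb show False by simp
        qed
        then show ?thesis by simp
      qed simp
      have "measure M {\<omega> \<in> space M. ip01 (X \<omega>) (\<lambda>t. \<beta> t - \<beta>0 t) = \<alpha>0 - \<alpha> \<or> w (X \<omega>) = 0} < 1"
        using hyp dH ntd by blast
      with m1 show False by simp
    qed
  qed
  from partA partB show ?thesis by blast
qed


end
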